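(* Let $K$ be a commutative unital ring, $k<n$ in $\mathbb{N}^*$, and $\bar a,\bar b=(b_1,\dots,b_k),\bar c=(c_1,\dots,c_k)\in K^k$. Put $d_i:=b_ic_i$ ($1\le i\le k$), $\bar d:=(d_1,\dots,d_k)$, $d:=d_1\cdots d_k$, $U(i):=U_i(\pi^{\bar a,-\bar d}(k,k),d)$ for $i\in\mathbb{N}$, and write $n=mk+r$ with $0\le r<k$ (so $m\ge1$). Then \[\det T^k_n(\bar a,\bar b,\bar c)=U(m)\,\alpha^{\bar a,-\bar d}(k+r,k)-d\,U(m-1)\,\alpha^{\bar a,-\bar d}(r,k)\] \[=U(m+1)\,\alpha^{\bar a,-\bar d}(r,k)+d_kd_1\cdots d_r\,U(m)\,\alpha^{\bar a,-\bar d}_{r+1}(k-r-2,k).\] In particular, if $r=k-1$ then $\det T^k_{mk+k-1}(\bar a,\bar b,\bar c)=U(m+1)\,\det T^k_{k-1}(\bar a,\bar b,\bar c)=U(m+1)\alpha^{\bar a,-\bar d}(k-1,k)$.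
   Context: Vectors in $K^k$ are extended periodically ($a_{i+k}:=a_i$), $-\bar d$ componentwise. $T^k_n(\bar a,\bar b,\bar c)\in M_n(K)$ is the tridiagonal matrix with diagonal $a_1,\dots,a_n$, superdiagonal $b_1,\dots,b_{n-1}$, subdiagonal $c_1,\dots,c_{n-1}$, zeros elsewhere. $U_m(x,y):=\sum_{i=0}^{\lfloor (m-1)/2\rfloor}(-1)^i\binom{m-1-i}{i}x^{m-1-2i}y^i$ (so $U_0=0$, $U_1=1$). In $P=\mathbb{Z}[x_1,\dots,x_k,y_1,\dots,y_k]$, indices are periodic ($x_{i+k}:=x_i$, $y_{i+k}:=y_i$); shift $f_s:=f(x_{s+1},\dots,x_{s+k},y_{s+1},\dots,y_{s+k})$; for $\bar a,\bar e\in K^k$, $f^{\bar a,\bar e}$ is the image of $f$ under $x_i\mapsto a_i$, $y_i\mapsto e_i$, and $f_s^{\bar a,\bar e}:=(f_s)^{\bar a,\bar e}$. Write $[r]=\{1,\dots,r\}$, $S+1=\{s+1:s\in S\}$. For $0\le r\le k$, $\alpha(r,k):=\sum_{S}\prod_{i\in S}y_i\prod_{j\in[r]\setminus(S\cup(S+1))}x_j$ over subsets $S\subseteq\{1,\dots,r-1\}$ with no two consecutive integers; $\alpha(-1,k):=0$; for $r>k$, $\alpha(r,k):=x_r\alpha(r-1,k)+y_{r-1}\alpha(r-2,k)$; $\alpha_s(r,k):=(\alpha(r,k))_s$. $\beta(0,k)=\beta(1,k):=0$ and for $2\le r\le k+1$, $\beta(r,k):=\sum_S y_k\prod_{i\in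 S}y_i\prod_{j\in\{2,\dots,r-1\}\setminus(S\cup(S+1))}x_j$ over $S\subseteq\{2,\dots,r-2\}$ with no two consecutive integers. $\pi(r,k):=\alpha(r,k)+\beta(r,k)$ for $0\le r\le k$. *)

theory Defs
  imports "Jordan_Normal_Form.Determinant"
begin

text \<open>Vectors of K^k are functions nat => 'a whose values at 1..k are the entries;
  per k v is the periodic extension (v_(i+k) = v_i), 1-based indices.\<close>
definition per :: "nat \<Rightarrow> (nat \<Rightarrow> 'a) \<Rightarrow> nat \<Rightarrow> 'a" where
  "per k v i = v ((i + k - 1) mod k + 1)"

text \<open>Tridiagonal n x n matrix with diagonal a_1..a_n, superdiagonal b_1..b_(n-1),
  subdiagonal c_1..c_(n-1) (1-based sequences; matrix indices are 0-based).\<close>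
definition tridiag :: "nat \<Rightarrow> (nat \<Rightarrow> 'a::zero) \<Rightarrow> (nat \<Rightarrow> 'a) \<Rightarrow> (nat \<Rightarrow> 'a) \<Rightarrow> 'a mat" where
  "tridiag n a b c = mat n n (\<lambda>(i,j). if i = j then a (i+1)
      else if j = i + 1 then b (i+1) else if i = j + 1 then c (j+1) else 0)"

definition Tk :: "nat \<Rightarrow> nat \<Rightarrow> (nat \<Rightarrow> 'a::zero) \<Rightarrow> (nat \<Rightarrow> 'a) \<Rightarrow> (nat \<Rightarrow> 'a) \<Rightarrow> 'a mat" where
  "Tk k n a b c = tridiag n (per k a) (per k b) (per k c)"

definition Ucheb :: "nat \<Rightarrow> 'a::comm_ring_1 \<Rightarrow> 'a \<Rightarrow> 'a" where
  "Ucheb m x y = (if m = 0 then 0 else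
     (\<Sum>i\<in>{0..(m-1) div 2}. (-1)^i * of_nat ((m-1-i) choose i) * x^(m-1-2*i) * y^i))"

definition no_consec :: "nat set \<Rightarrow> bool" where
  "no_consec S \<longleftrightarrow> (\<forall>i\<in>S. Suc i \<notin> S)"

text \<open>alpha(r,k) for 0 <= r <= k, evaluated at x_i |-> x i, y_i |-> y i.\<close>
definition alpha_sum :: "(nat \<Rightarrow> 'a::comm_ring_1) \<Rightarrow> (nat \<Rightarrow> 'a) \<Rightarrow> nat \<Rightarrow> 'a" where
  "alpha_sum x y r = (\<Sum>S\<in>{S. S \<subseteq> {1..<r} \<and> no_consec S}.
      (\<Prod>i\<in>S. y i) * (\<Prod>j\<in>{1..r} - (S \<union> Suc ` S). x j))"

text \<open>alpha(r,k) for r >= 0, evaluated (x, y are the periodically extended evaluation sequences).\<close>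
function alphaN :: "nat \<Rightarrow> (nat \<Rightarrow> 'a::comm_ring_1) \<Rightarrow> (nat \<Rightarrow> 'a) \<Rightarrow> nat \<Rightarrow> 'a" where
  "alphaN k x y r = (if r \<le> k then alpha_sum x y r
     else x r * alphaN k x y (r - 1) + y (r - 1) * alphaN k x y (r - 2))"
  by auto
termination by (relation "measure (\<lambda>(k,x,y,r). r)") auto

definition alpha :: "nat \<Rightarrow> (nat \<Rightarrow> 'a::comm_ring_1) \<Rightarrow> (nat \<Rightarrow> 'a) \<Rightarrow> int \<Rightarrow> 'a" where
  "alpha k x y r = (if r < 0 then 0 else alphaN k x y (nat r))"

definition alpha_ev :: "nat \<Rightarrow> (nat \<Rightarrow> 'a::comm_ring_1) \<Rightarrow> (nat \<Rightarrow> 'a) \<Rightarrow> int \<Rightarrow> 'a" where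
  "alpha_ev k a e r = alpha k (per k a) (per k e) r"

definition alpha_shift_ev :: "nat \<Rightarrow> nat \<Rightarrow> (nat \<Rightarrow> 'a::comm_ring_1) \<Rightarrow> (nat \<Rightarrow> 'a) \<Rightarrow> int \<Rightarrow> 'a" where
  "alpha_shift_ev k s a e r = alpha k (\<lambda>i. per k a (s + i)) (\<lambda>i. per k e (s + i)) r"

definition beta_ev :: "nat \<Rightarrow> (nat \<Rightarrow> 'a::comm_ring_1) \<Rightarrow> (nat \<Rightarrow> 'a) \<Rightarrow> nat \<Rightarrow> 'a" where
  "beta_ev k a e r = (if r < 2 then 0 else
     (\<Sum>S\<in>{S. S \<subseteq> {2..<r-1} \<and> no_consec S}.
        e k * (\<Prod>i\<in>S. e i) * (\<Prod>j\<in>{2..<r} - (S \<union> Suc ` S). a j)))"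

definition pi_ev :: "nat \<Rightarrow> (nat \<Rightarrow> 'a::comm_ring_1) \<Rightarrow> (nat \<Rightarrow> 'a) \<Rightarrow> nat \<Rightarrow> 'a" where
  "pi_ev k a e r = alpha_ev k a e (int r) + beta_ev k a e r"

end

theory Submission
  imports Defs
begin

fun K :: "(nat \<Rightarrow> 'a::comm_ring_1) \<Rightarrow> (nat \<Rightarrow> 'a) \<Rightarrow> nat \<Rightarrow> nat \<Rightarrow> 'a" where
  "K x y s 0 = 0"
| "K x y s (Suc 0) = 1"
| "K x y s (Suc (Suc n)) = x (s+n+1) * K x y s (Suc n) + y (s+n) * K x y s n"

declare alphaN.simps[simp del]

lemma nat_induct012: "P 0 \<Longrightarrow> P 1 \<Longrightarrow> (\<And>n. P n \<Longrightarrow> P (Suc n) \<Longrightarrow> P (Suc (Suc n))) \<Longrightarrow> P n"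
  by (induction n rule: nat_less_induct) (metis One_nat_def less_Suc_eq not0_implies_Suc)

lemma K_split: "K x y s (P+Q+1) = K x y s (P+1) * K x y (s+P) (Q+1) + y(s+P) * K x y s P * K x y (s+P+1) Q"
proof (induction Q rule: nat_induct012)
  case 1
  then show ?case by simp
next
  case 2
  then show ?case by (simp add: algebra_simps)
next
  case (3 n)
  have e1: "K x y s (P + Suc (Suc n) + 1) = x (s+P+n+2) * K x y s (P+Suc n+1) + y (s+P+n+1) * K x y s (P+n+1)"
    by (simp add: algebra_simps numeral_2_eq_2)
  have e2: "K x y (s+P) (Suc (Suc n) + 1) = x (s+P+n+2) * K x y (s+P) (Suc n+1) + y (s+P+n+1) * K x y (s+P) (n+1)"
    by (simp add: algebra_simps numeral_2_eq_2)
  have e3: "K x y (s+P+1) (Suc (Suc n)) = x (s+P+n+2) * K x y (s+P+1) (Suc n) + y (s+P+n+1) * K x y (s+P+1) n"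
    by (simp add: algebra_simps numeral_2_eq_2)
  show ?case unfolding e1 e2 e3 3 by (simp add: algebra_simps)
qed

lemma K_left: "K x y s (Suc (Suc n)) = x (s+1) * K x y (s+1) (Suc n) + y (s+1) * K x y (s+2) n"
  using K_split[of x y s 1 n] by (simp add: numeral_2_eq_2 algebra_simps)

lemma K_per:
  assumes "\<And>i. x (i+k) = x i" "\<And>i. y (i+k) = y i"
  shows "K x y (s+k) n = K x y s n"
proof (induction n rule: nat_induct012)
  case (3 n)
  have "x (s+k+n+1) = x (s+n+1)" "y (s+k+n) = y (s+n)"
    using assms by (metis add.commute add.left_commute)+
  then show ?case using 3 by simp
qed auto

lemma K_cas: "K x y 0 (n+2) * K x y 1 n - K x y 0 (n+1) * K x y 1 (n+1) = (-1)^(n+1) * (\<Prod>i\<in>{1..n}. y i)"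
proof (induction n)
  case 0
  then show ?case by (simp add: numeral_2_eq_2)
next
  case (Suc n)
  have a: "K x y 0 (Suc n + 2) = x (n+2) * K x y 0 (n+2) + y (n+1) * K x y 0 (n+1)"
    by (simp add: numeral_2_eq_2)
  have b: "K x y 1 (Suc n + 1) = x (n+2) * K x y 1 (n+1) + y (n+1) * K x y 1 n"
  proof (cases n)
    case 0 then show ?thesis by simp
  next
    case (Suc m) then show ?thesis by simp
  qed
  have p: "(\<Prod>i\<in>{1..Suc n}. y i) = (\<Prod>i\<in>{1..n}. y i) * y (n+1)"
    by (simp add: prod.nat_ivl_Suc' mult.commute)
  show ?case unfolding a b p using Suc[symmetric] by (simp add: algebra_simps)
qed

lemma K_dodg: "r \<le> N \<Longrightarrow> K x y 0 (N+1) * K x y 1 r - K x y 1 N * K x y 0 (r+1)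
   = (-1)^(r+1) * (\<Prod>i\<in>{1..r}. y i) * K x y (r+1) (N-r)"
proof (induction r rule: nat_induct012)
  case 1
  then show ?case by simp
next
  case 2
  have "K x y 0 (1+(N-1)+1) = K x y 0 2 * K x y 1 N + y 1 * K x y 0 1 * K x y 2 (N-1)"
    using K_split[of x y 0 1 "N-1"] 2 by (simp add: numeral_2_eq_2)
  then show ?case using 2 by (simp add: numeral_2_eq_2 algebra_simps)
next
  case (3 n)
  have a: "K x y 0 (Suc (Suc n) + 1) = x (n+2) * K x y 0 (Suc n+1) + y (n+1) * K x y 0 (n+1)"
    by (simp add: numeral_2_eq_2)
  have b: "K x y 1 (Suc (Suc n)) = x (n+2) * K x y 1 (Suc n) + y (n+1) * K x y 1 n"
    by (simp add: numeral_2_eq_2)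
  have "N - n = Suc (Suc (N - n - 2))" using "3.prems" by arith then obtain q where q: "N - n = Suc (Suc q)" by blast
  have c: "K x y (n+1) (N-n) = x (n+2) * K x y (n+2) (N - Suc n) + y (n+2) * K x y (n+3) (N - Suc (Suc n))"
  proof -
    have "N - Suc n = Suc q" "N - Suc (Suc n) = q" using q by auto
    then show ?thesis unfolding q using K_left[of x y "n+1" q] by (simp add: numeral_2_eq_2 numeral_3_eq_3)
  qed
  have p1: "(\<Prod>i\<in>{1..Suc n}. y i) = (\<Prod>i\<in>{1..n}. y i) * y (n+1)"
    by (simp add: prod.nat_ivl_Suc' mult.commute)
  have p2: "(\<Prod>i\<in>{1..Suc (Suc n)}. y i) = (\<Prod>i\<in>{1..n}. y i) * y (n+1) * y (n+2)"
    by (simp add: prod.nat_ivl_Suc' mult.commute mult.left_commute)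
  have i1: "K x y 0 (N+1) * K x y 1 n - K x y 1 N * K x y 0 (n+1)
   = (-1)^(n+1) * (\<Prod>i\<in>{1..n}. y i) * K x y (n+1) (N-n)" using 3(1) "3.prems" by simp
  have i2: "K x y 0 (N+1) * K x y 1 (Suc n) - K x y 1 N * K x y 0 (Suc n+1)
   = (-1)^(n+2) * (\<Prod>i\<in>{1..n}. y i) * y (n+1) * K x y (n+2) (N-Suc n)" using 3(2) "3.prems" unfolding p1 by simp
  have "K x y 0 (N+1) * K x y 1 (Suc (Suc n)) - K x y 1 N * K x y 0 (Suc (Suc n)+1)
     = x (n+2) * (K x y 0 (N+1) * K x y 1 (Suc n) - K x y 1 N * K x y 0 (Suc n+1))
       + y (n+1) * (K x y 0 (N+1) * K x y 1 n - K x y 1 N * K x y 0 (n+1))"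
    unfolding a b by (simp add: algebra_simps)
  also have "\<dots> = (-1)^(n+1) * ((\<Prod>i\<in>{1..n}. y i) * y (n+1) * y (n+2)) * K x y (n+3) (N - Suc (Suc n))"
  proof -
    have m: "(-1::'a)^(n+2) = - ((-1)^(n+1))" by simp
    show ?thesis unfolding i1 i2 c m by (simp add: algebra_simps)
  qed
  finally show ?case unfolding p2 by (simp add: numeral_3_eq_3)
qed

lemma tridiag_carrier: "tridiag n a b c \<in> carrier_mat n n"
  unfolding tridiag_def by auto

lemma tridiag_dims[simp]: "dim_row (tridiag n a b c) = n" "dim_col (tridiag n a b c) = n"
  unfolding tridiag_def by auto

lemma tridiag_index: "i < n \<Longrightarrow> j < n \<Longrightarrow> tridiag n a b c $$ (i,j) = (if i = j then a (i+1)
      else if j = i + 1 then b (i+1) else if i = j + 1 then c (j+1) else 0)"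
  unfolding tridiag_def by auto

lemma det_tridiag: "det (tridiag n a b c) = K a (\<lambda>i. - (b i * c i)) 0 (Suc n)"
proof (induction n rule: nat_induct012)
  case 1
  then show ?case using tridiag_carrier[of 0 a b c] by simp
next
  case 2
  have "det (tridiag 1 a b c) = (\<Sum>j<1. tridiag 1 a b c $$ (0,j) * cofactor (tridiag 1 a b c) 0 j)"
    by (rule laplace_expansion_row[OF tridiag_carrier]) simp
  also have "\<dots> = a 1" unfolding cofactor_def
    by (simp add: tridiag_index mat_delete_def)
  finally show ?case by simp
next
  case (3 n)
  let ?T = "tridiag (Suc (Suc n)) a b c"
  have "det ?T = (\<Sum>j<Suc (Suc n). ?T $$ (Suc n,j) * cofactor ?T (Suc n) j)"
    by (rule laplace_expansion_row[OF tridiag_carrier]) simp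
  also have "\<dots> = ?T $$ (Suc n, n) * cofactor ?T (Suc n) n + ?T $$ (Suc n, Suc n) * cofactor ?T (Suc n) (Suc n)"
  proof -
    have "(\<Sum>j<n. ?T $$ (Suc n,j) * cofactor ?T (Suc n) j) = 0"
      by (rule sum.neutral) (auto simp: tridiag_index)
    then show ?thesis by (simp add: sum.lessThan_Suc)
  qed
  also have "?T $$ (Suc n, Suc n) = a (n+2)" by (simp add: tridiag_index)
  also have "?T $$ (Suc n, n) = c (n+1)" by (simp add: tridiag_index)
  finally have D: "det ?T = c (n+1) * cofactor ?T (Suc n) n + a (n+2) * cofactor ?T (Suc n) (Suc n)" .
  have M1: "mat_delete ?T (Suc n) (Suc n) = tridiag (Suc n) a b c"
    by (rule eq_matI) (auto simp: mat_delete_def tridiag_index tridiag_def)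
  have M2: "det (mat_delete ?T (Suc n) n) = b (n+1) * det (tridiag n a b c)"
  proof -
    let ?M = "mat_delete ?T (Suc n) n"
    have M: "?M \<in> carrier_mat (Suc n) (Suc n)" using mat_delete_carrier[OF tridiag_carrier, of "Suc (Suc n)" a b c "Suc n" n] by simp
    have "det ?M = (\<Sum>i<Suc n. ?M $$ (i,n) * cofactor ?M i n)"
      by (rule laplace_expansion_column[OF M]) simp
    also have "\<dots> = ?M $$ (n,n) * cofactor ?M n n"
    proof -
      have "(\<Sum>i<n. ?M $$ (i,n) * cofactor ?M i n) = 0"
        by (rule sum.neutral) (auto simp: mat_delete_def tridiag_index)
      then show ?thesis by (simp add: sum.lessThan_Suc)
    qed
    also have "?M $$ (n,n) = b (n+1)" by (simp add: mat_delete_def tridiag_index)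
    finally have D2: "det ?M = b (n+1) * cofactor ?M n n" .
    have "mat_delete ?M n n = tridiag n a b c"
      by (rule eq_matI) (auto simp: mat_delete_def tridiag_index tridiag_def)
    then show ?thesis unfolding D2 cofactor_def by simp
  qed
  have "det ?T = c (n+1) * ((-1)^(Suc n + n) * (b (n+1) * det (tridiag n a b c)))
     + a (n+2) * ((-1)^(Suc n + Suc n) * det (tridiag (Suc n) a b c))"
    unfolding D cofactor_def M1 M2 by simp
  also have "\<dots> = a (n+2) * det (tridiag (Suc n) a b c) - b (n+1) * c (n+1) * det (tridiag n a b c)"
    by (simp add: algebra_simps)
  finally show ?case using 3 by (simp add: algebra_simps)
qed

definition Fs :: "(nat \<Rightarrow> 'a::comm_ring_1) \<Rightarrow> (nat \<Rightarrow> 'a) \<Rightarrow> nat \<Rightarrow> nat \<Rightarrow> 'a" where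
  "Fs x y lo n = (\<Sum>S\<in>{S. S \<subseteq> {lo..<lo+n-1} \<and> no_consec S}.
      (\<Prod>i\<in>S. y i) * (\<Prod>j\<in>{lo..<lo+n} - (S \<union> Suc ` S). x j))"

lemma Fs_0: "lo \<ge> 1 \<Longrightarrow> Fs x y lo 0 = 1"
proof -
  assume "lo \<ge> 1"
  then have "{S. S \<subseteq> {lo..<lo+0-1} \<and> no_consec S} = {{}}" by (auto simp: no_consec_def)
  then show ?thesis unfolding Fs_def by simp
qed

lemma Fs_1: "Fs x y lo 1 = x lo"
proof -
  have "{S. S \<subseteq> {lo..<lo+1-1} \<and> no_consec S} = {{}}" by (auto simp: no_consec_def)
  then show ?thesis unfolding Fs_def by simp
qed

lemma Fs_rec: "Fs x y lo (Suc (Suc n)) = x (lo+n+1) * Fs x y lo (Suc n) + y (lo+n) * Fs x y lo n"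
proof -
  let ?A1 = "{S. S \<subseteq> {lo..<lo+n} \<and> no_consec S}"
  let ?A0 = "{S. S \<subseteq> {lo..<lo+n-1} \<and> no_consec S}"
  let ?f = "\<lambda>S. (\<Prod>i\<in>S. y i) * (\<Prod>j\<in>{lo..<lo+Suc (Suc n)} - (S \<union> Suc ` S). x j)"
  have fin1: "finite ?A1" by (rule finite_subset[of _ "Pow {lo..<lo+n}"]) auto
  have fin0: "finite ?A0" by (rule finite_subset[of _ "Pow {lo..<lo+n-1}"]) auto
  have eqA: "{S. S \<subseteq> {lo..<lo+Suc (Suc n)-1} \<and> no_consec S} = ?A1 \<union> insert (lo+n) ` ?A0"
  proof (intro equalityI subsetI)
    fix S assume "S \<in> {S. S \<subseteq> {lo..<lo+Suc (Suc n)-1} \<and> no_consec S}"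
    then have S: "S \<subseteq> {lo..<lo+n+1}" "no_consec S" by auto
    show "S \<in> ?A1 \<union> insert (lo+n) ` ?A0"
    proof (cases "lo+n \<in> S")
      case False
      then have "S \<subseteq> {lo..<lo+n}" using S(1) by (auto simp: less_Suc_eq)
      then show ?thesis using S by auto
    next
      case True
      have "S - {lo+n} \<subseteq> {lo..<lo+n-1}"
      proof
        fix j assume j: "j \<in> S - {lo+n}"
        then have "j \<ge> lo" "j < lo+n" using S(1) by (auto simp: less_Suc_eq)
        moreover have "Suc j \<noteq> lo + n" using j True S(2) unfolding no_consec_def by auto
        ultimately show "j \<in> {lo..<lo+n-1}" by auto
      qed
      moreover have "no_consec (S - {lo+n})" using S(2) unfolding no_consec_def by auto
      moreover have "S = insert (lo+n) (S - {lo+n})" using True by auto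
      ultimately show ?thesis by blast
    qed
  next
    fix S assume "S \<in> ?A1 \<union> insert (lo+n) ` ?A0"
    then show "S \<in> {S. S \<subseteq> {lo..<lo+Suc (Suc n)-1} \<and> no_consec S}"
    proof
      assume "S \<in> ?A1" then show ?thesis by auto
    next
      assume "S \<in> insert (lo+n) ` ?A0"
      then obtain S' where S': "S' \<subseteq> {lo..<lo+n-1}" "no_consec S'" "S = insert (lo+n) S'" by auto
      have "no_consec S" unfolding no_consec_def S'(3)
        using S' unfolding no_consec_def by fastforce
      then show ?thesis using S' by force
    qed
  qed
  have disj: "?A1 \<inter> insert (lo+n) ` ?A0 = {}" by auto
  have inj: "inj_on (insert (lo+n)) ?A0"
  proof (rule inj_onI)
    fix S T assume "S \<in> ?A0" "T \<in> ?A0" "insert (lo+n) S = insert (lo+n) T"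
    moreover have "lo+n \<notin> S" "lo+n \<notin> T" using calculation(1,2) by auto
    ultimately show "S = T" by (metis Diff_insert_absorb)
  qed
  have s1: "\<And>S. S \<in> ?A1 \<Longrightarrow> ?f S = x (lo+n+1) * ((\<Prod>i\<in>S. y i) * (\<Prod>j\<in>{lo..<lo+Suc n} - (S \<union> Suc ` S). x j))"
  proof -
    fix S assume S: "S \<in> ?A1"
    have "{lo..<lo+Suc (Suc n)} - (S \<union> Suc ` S) = insert (lo+n+1) ({lo..<lo+Suc n} - (S \<union> Suc ` S))"
      using S by auto
    then show "?f S = x (lo+n+1) * ((\<Prod>i\<in>S. y i) * (\<Prod>j\<in>{lo..<lo+Suc n} - (S \<union> Suc ` S). x j))"
      by (simp add: algebra_simps)
  qed
  have s0: "\<And>S. S \<in> ?A0 \<Longrightarrow> ?f (insert (lo+n) S) = y (lo+n) * ((\<Prod>i\<in>S. y i) * (\<Prod>j\<in>{lo..<lo+n} - (S \<union> Suc ` S). x j))"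
  proof -
    fix S assume S: "S \<in> ?A0"
    have fS: "finite S" using S by (auto intro: finite_subset)
    have nS: "lo + n \<notin> S" using S by auto
    have "{lo..<lo+Suc (Suc n)} - (insert (lo+n) S \<union> Suc ` insert (lo+n) S) = {lo..<lo+n} - (S \<union> Suc ` S)"
      using S by auto
    then show "?f (insert (lo+n) S) = y (lo+n) * ((\<Prod>i\<in>S. y i) * (\<Prod>j\<in>{lo..<lo+n} - (S \<union> Suc ` S). x j))"
      using fS nS by (simp add: algebra_simps)
  qed
  have "Fs x y lo (Suc (Suc n)) = sum ?f ?A1 + sum ?f (insert (lo+n) ` ?A0)"
    unfolding Fs_def eqA by (rule sum.union_disjoint[OF fin1 finite_imageI[OF fin0] disj])
  also have "sum ?f (insert (lo+n) ` ?A0) = sum (?f \<circ> insert (lo+n)) ?A0"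
    by (rule sum.reindex[OF inj])
  also have "sum ?f ?A1 = x (lo+n+1) * Fs x y lo (Suc n)"
    unfolding Fs_def sum_distrib_left using s1 by (intro sum.cong) auto
  also have "sum (?f \<circ> insert (lo+n)) ?A0 = y (lo+n) * Fs x y lo n"
    unfolding Fs_def sum_distrib_left using s0 by (intro sum.cong) auto
  finally show ?thesis .
qed

lemma Fs_K: "lo \<ge> 1 \<Longrightarrow> Fs x y lo n = K x y (lo - 1) (Suc n)"
proof (induction n rule: nat_induct012)
  case 1 then show ?case by (simp add: Fs_0)
next
  case 2 then show ?case using Fs_1[of x y lo] by simp
next
  case (3 n)
  then show ?case by (simp add: Fs_rec)
qed

definition gU :: "'a::comm_ring_1 \<Rightarrow> 'a \<Rightarrow> nat \<Rightarrow> nat \<Rightarrow> 'a" where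
  "gU x y m i = (-1)^i * of_nat ((m-i) choose i) * x^(m-2*i) * y^i"

lemma gU_zero: "m < 2*i \<Longrightarrow> gU x y m i = 0"
  unfolding gU_def by (simp add: binomial_eq_0)

lemma Ucheb_sum: "Ucheb (Suc m) x y = (\<Sum>i\<le>m. gU x y m i)"
proof -
  have "Ucheb (Suc m) x y = (\<Sum>i\<in>{0..m div 2}. gU x y m i)"
    unfolding Ucheb_def gU_def by simp
  also have "\<dots> = (\<Sum>i\<le>m. gU x y m i)"
    by (rule sum.mono_neutral_left) (auto intro!: gU_zero)
  finally show ?thesis .
qed

lemma ring_aux1: "(-P) * (A + B) * X * (y*Yv) = (-P)*A*X*(y*Yv) - y*(P*B*X*Yv)" for P A B X y Yv :: "'a::comm_ring_1"
  by (simp add: algebra_simps)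

lemma ring_aux2: "x * ((-1)^Suc i * C * X * y^Suc i) = (-((-1)^i)) * C * (x * X) * (y*y^i)" for x C X y :: "'a::comm_ring_1"
  by (simp add: algebra_simps)

lemma gU_step: "gU x y (Suc (Suc m)) (Suc i) = x * gU x y (Suc m) (Suc i) - y * gU x y m i"
proof (cases "i \<le> m")
  case True
  have c: "of_nat ((Suc (Suc m) - Suc i) choose Suc i) = (of_nat ((m - i) choose (Suc i)) + of_nat ((m-i) choose i) :: 'a)"
    using True by (simp add: Suc_diff_le)
  have e1: "Suc (Suc m) - 2 * Suc i = m - 2*i" by simp
  have e2: "x * gU x y (Suc m) (Suc i) = (-((-1)^i)) * of_nat ((m - i) choose (Suc i)) * x^(m-2*i) * (y * y^i)"
  proof (cases "Suc (2*i) \<le> m")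
    case True
    obtain q where q: "m - 2*i = Suc q" "Suc m - 2 * Suc i = q" using True
      by (intro that[of "m - 2*i - 1"]) auto
    have xx: "x * x^(Suc m - 2 * Suc i) = x^(m-2*i)" unfolding q by simp
    have "x * gU x y (Suc m) (Suc i) = (-((-1)^i)) * of_nat ((m - i) choose (Suc i)) * (x * x^(Suc m - 2 * Suc i)) * (y * y^i)"
      unfolding gU_def diff_Suc_Suc by (rule ring_aux2)
    then show ?thesis unfolding xx .
  next
    case False
    then have z: "(m - i) choose (Suc i) = 0" by (simp add: binomial_eq_0)
    show ?thesis unfolding gU_def diff_Suc_Suc z by simp
  qed
  have e3: "gU x y (Suc (Suc m)) (Suc i) = (-((-1)^i)) * (of_nat ((m - i) choose (Suc i)) + of_nat ((m-i) choose i)) * x^(m-2*i) * (y * y^i)"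
    unfolding gU_def c e1 by simp
  have e4: "gU x y m i = (-1)^i * of_nat ((m-i) choose i) * x^(m-2*i) * y^i" unfolding gU_def ..
  show ?thesis unfolding e2 e3 e4 by (rule ring_aux1)
next
  case False
  then show ?thesis unfolding gU_def by (simp add: binomial_eq_0)
qed

lemma Ucheb_rec: "Ucheb (Suc (Suc n)) x y = x * Ucheb (Suc n) x y - y * Ucheb n x y"
proof (cases n)
  case 0
  then show ?thesis by (simp add: Ucheb_def)
next
  case (Suc m)
  define A where "A = (\<Sum>i\<le>Suc m. gU x y (Suc (Suc m)) (Suc i))"
  define B where "B = (\<Sum>i\<le>Suc m. gU x y (Suc m) (Suc i))"
  define C where "C = (\<Sum>i\<le>Suc m. gU x y m i)"
  have U3: "Ucheb (Suc (Suc (Suc m))) x y = gU x y (Suc (Suc m)) 0 + A"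
    unfolding Ucheb_sum A_def by (rule sum.atMost_Suc_shift)
  have AB: "A = x * B - y * C"
    unfolding A_def B_def C_def by (simp only: gU_step sum_subtractf sum_distrib_left)
  have C: "C = Ucheb (Suc m) x y"
    unfolding C_def Ucheb_sum using gU_zero[of m "Suc m" x y] by (simp only: sum.atMost_Suc) simp
  have B0: "B = (\<Sum>i\<le>m. gU x y (Suc m) (Suc i))"
    unfolding B_def using gU_zero[of "Suc m" "Suc (Suc m)" x y] by (simp only: sum.atMost_Suc) simp
  have U2: "Ucheb (Suc (Suc m)) x y = gU x y (Suc m) 0 + (\<Sum>i\<le>m. gU x y (Suc m) (Suc i))"
    unfolding Ucheb_sum by (rule sum.atMost_Suc_shift)
  have g0: "gU x y (Suc (Suc m)) 0 = x * gU x y (Suc m) 0" unfolding gU_def by simp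
  show ?thesis unfolding Suc U3 AB C g0 B0 using U2 by (simp add: algebra_simps)
qed

lemma K_shift: "K (\<lambda>i. x (s+i)) (\<lambda>i. y (s+i)) 0 n = K x y s n"
  by (induction n rule: nat_induct012) (auto simp: add.assoc)

lemma K_cong: "(\<And>i. s < i \<Longrightarrow> i \<le> s + n \<Longrightarrow> x i = x' i \<and> y i = y' i) \<Longrightarrow> K x y s n = K x' y' s n"
proof (induction n rule: nat_induct012)
  case (3 n)
  have "K x y s n = K x' y' s n" "K x y s (Suc n) = K x' y' s (Suc n)" using 3 by auto
  moreover have "x (s+n+1) = x' (s+n+1)" using "3.prems"[of "s+n+1"] by simp
  moreover have "y (s+n) = y' (s+n)" if "n > 0" using "3.prems"[of "s+n"] that by simp
  moreover have "K x y s n = 0" "K x' y' s n = 0" if "n = 0" using that by simp_all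
  ultimately show ?case by (cases "n = 0") simp_all
qed auto

lemma alphaN_K: "k \<ge> 1 \<Longrightarrow> alphaN k x y r = K x y 0 (Suc r)"
proof (induction r rule: nat_less_induct)
  case (1 r)
  show ?case
  proof (cases "r \<le> k")
    case True
    have "alpha_sum x y r = Fs x y 1 r"
      unfolding alpha_sum_def Fs_def by (simp add: atLeastLessThanSuc_atLeastAtMost)
    then show ?thesis using True by (subst alphaN.simps) (simp add: Fs_K)
  next
    case False
    have "r = Suc (Suc (r - 2))" using "1.prems" False by arith
    then obtain q where q: "r = Suc (Suc q)" by blast
    have A0: "alphaN k x y r = x r * alphaN k x y (r - 1) + y (r - 1) * alphaN k x y (r - 2)"
      using False by (subst alphaN.simps) simp
    have IH: "\<And>m. m < r \<Longrightarrow> alphaN k x y m = K x y 0 (Suc m)" using "1.IH" "1.prems" by blast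
    have l1: "r - 1 < r" "r - 2 < r" "Suc (r-1) = r" "Suc (r - 2) = r - 1" using q by auto
    have "alphaN k x y (r - 1) = K x y 0 r" using IH[OF l1(1)] unfolding l1(3) .
    moreover have "alphaN k x y (r - 2) = K x y 0 (r - 1)" using IH[OF l1(2)] unfolding l1(4) .
    ultimately have "x r * alphaN k x y (r - 1) + y (r - 1) * alphaN k x y (r - 2) = x r * K x y 0 r + y (r - 1) * K x y 0 (r - 1)" by simp
    also have "x r * K x y 0 r + y (r - 1) * K x y 0 (r - 1) = K x y 0 (Suc r)" unfolding q by simp
    finally show ?thesis using A0 by simp
  qed
qed

lemma alpha_K: "k \<ge> 1 \<Longrightarrow> alpha k x y (int r) = K x y 0 (Suc r)"
  unfolding alpha_def by (simp add: alphaN_K)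

lemma per_low: "1 \<le> i \<Longrightarrow> i \<le> k \<Longrightarrow> per k v i = v i"
proof -
  assume "1 \<le> i" "i \<le> k"
  then have e: "i + k - 1 = (i - 1) + k" by simp
  have "(i - 1) mod k = i - 1" using \<open>1 \<le> i\<close> \<open>i \<le> k\<close> by simp
  then have "(i + k - 1) mod k = i - 1" unfolding e by simp
  then show ?thesis unfolding per_def using \<open>1 \<le> i\<close> by simp
qed

lemma per_period: "per k v (i + k) = per k v i"
proof -
  have "i + k + k - 1 = (i + k - 1) + k" by (cases k) auto
  then show ?thesis unfolding per_def by simp
qed

lemma cheb_main:
  fixes X Y :: "nat \<Rightarrow> 'a::comm_ring_1"
  assumes k: "k > 0" and pX: "\<And>i. X (i+k) = X i" and pY: "\<And>i. Y (i+k) = Y i"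
  defines "t \<equiv> K X Y 0 (k+1) + Y k * K X Y 1 (k-1)"
  defines "dt \<equiv> (-1)^k * (\<Prod>i\<in>{1..k}. Y i)"
  shows "K X Y 0 (Suc j * k + r + 1) = Ucheb (Suc j) t dt * K X Y 0 (k+r+1) - dt * Ucheb j t dt * K X Y 0 (r+1)"
proof -
  define u where "u j = K X Y 0 (j * k + r + 1)" for j
  define v where "v j = K X Y 1 (j * k + r)" for j
  define A where "A = K X Y 0 (k+1)"
  define B where "B = Y k * K X Y 0 k"
  define C where "C = K X Y 1 k"
  define D where "D = Y k * K X Y 1 (k-1)"
  have ru: "u (Suc j) = A * u j + B * v j" for j
  proof -
    have "K X Y 0 (k + (j*k+r) + 1) = K X Y 0 (k+1) * K X Y (0+k) (j*k+r+1) + Y (0+k) * K X Y 0 k * K X Y (0+k+1) (j*k+r)"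
      using K_split[of X Y 0 k "j*k+r"] by simp
    moreover have "K X Y (0+k) (j*k+r+1) = K X Y 0 (j*k+r+1)" by (rule K_per[where x=X and y=Y and k=k, OF pX pY])
    moreover have "K X Y (0+k+1) (j*k+r) = K X Y 1 (j*k+r)" using K_per[where x=X and y=Y and k=k, OF pX pY, of 1] by (simp add: add.commute)
    ultimately show ?thesis unfolding u_def v_def A_def B_def by (simp add: algebra_simps)
  qed
  have rv: "v (Suc j) = C * u j + D * v j" for j
  proof -
    have "K X Y 1 ((k-1) + (j*k+r) + 1) = K X Y 1 (k-1+1) * K X Y (1+(k-1)) (j*k+r+1) + Y (1+(k-1)) * K X Y 1 (k-1) * K X Y (1+(k-1)+1) (j*k+r)"
      by (rule K_split)
    moreover have "1 + (k-1) = k" "k-1+1 = k" "(k-1) + (j*k+r) + 1 = Suc j * k + r" using k by auto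
    moreover have "K X Y k (j*k+r+1) = K X Y 0 (j*k+r+1)" using K_per[where x=X and y=Y and k=k, OF pX pY, of 0] by simp
    moreover have "K X Y (k+1) (j*k+r) = K X Y 1 (j*k+r)" using K_per[where x=X and y=Y and k=k, OF pX pY, of 1] by (simp add: add.commute)
    ultimately show ?thesis unfolding u_def v_def C_def D_def by (simp add: algebra_simps)
  qed
  have tAD: "t = A + D" unfolding t_def A_def D_def ..
  have det: "A * D - B * C = dt"
  proof -
    have c: "K X Y 0 (k-1+2) * K X Y 1 (k-1) - K X Y 0 (k-1+1) * K X Y 1 (k-1+1) = (-1)^(k-1+1) * (\<Prod>i\<in>{1..k-1}. Y i)"
      by (rule K_cas)
    have e: "k-1+2 = k+1" "k-1+1 = k" using k by auto
    have p: "(\<Prod>i\<in>{1..k}. Y i) = (\<Prod>i\<in>{1..k-1}. Y i) * Y k"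
      using k by (metis One_nat_def Suc_pred mult.commute prod.nat_ivl_Suc' Suc_leI)
    have "A * D - B * C = Y k * (K X Y 0 (k+1) * K X Y 1 (k-1) - K X Y 0 k * K X Y 1 k)"
      unfolding A_def B_def C_def D_def by (simp add: algebra_simps)
    also have "\<dots> = Y k * ((-1)^k * (\<Prod>i\<in>{1..k-1}. Y i))" using c unfolding e by simp
    finally show ?thesis unfolding dt_def p by (simp add: algebra_simps)
  qed
  have rec2: "u (Suc (Suc j)) = t * u (Suc j) - dt * u j" for j
  proof -
    have "u (Suc (Suc j)) = A * u (Suc j) + B * v (Suc j)" by (rule ru)
    also have "B * v (Suc j) = B * C * u j + D * (B * v j)" unfolding rv by (simp add: algebra_simps)
    also have "B * v j = u (Suc j) - A * u j" unfolding ru by simp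
    finally show ?thesis unfolding tAD det[symmetric] by (simp add: algebra_simps)
  qed
  have "u (Suc j) = Ucheb (Suc j) t dt * u 1 - dt * Ucheb j t dt * u 0"
  proof (induction j rule: nat_induct012)
    case 1 then show ?case by (simp add: Ucheb_def)
  next
    case 2 then show ?case using rec2[of 0] by (simp add: Ucheb_def numeral_2_eq_2)
  next
    case (3 n)
    have "u (Suc (Suc (Suc n))) = t * u (Suc (Suc n)) - dt * u (Suc n)" by (rule rec2)
    also have "\<dots> = (t * Ucheb (Suc (Suc n)) t dt - dt * Ucheb (Suc n) t dt) * u 1
        - dt * (t * Ucheb (Suc n) t dt - dt * Ucheb n t dt) * u 0"
      unfolding 3 by (simp add: algebra_simps)
    finally show ?case unfolding Ucheb_rec[symmetric] .
  qed
  then show ?thesis unfolding u_def by (simp add: add.commute)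
qed

lemma diff_main:
  fixes X Y :: "nat \<Rightarrow> 'a::comm_ring_1"
  assumes k: "k > 0" and pX: "\<And>i. X (i+k) = X i" and pY: "\<And>i. Y (i+k) = Y i" and r: "r < k"
  defines "t \<equiv> K X Y 0 (k+1) + Y k * K X Y 1 (k-1)"
  shows "K X Y 0 (k+r+1) - t * K X Y 0 (r+1) = Y k * ((-1)^(r+1) * (\<Prod>i\<in>{1..r}. Y i) * K X Y (r+1) (k-1-r))"
proof -
  have s: "K X Y 0 (k + r + 1) = K X Y 0 (k+1) * K X Y (0+k) (r+1) + Y (0+k) * K X Y 0 k * K X Y (0+k+1) r"
    using K_split[of X Y 0 k r] by simp
  have p1: "K X Y (0+k) (r+1) = K X Y 0 (r+1)" by (rule K_per[where x=X and y=Y and k=k, OF pX pY])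
  have p2: "K X Y (0+k+1) r = K X Y 1 r" using K_per[where x=X and y=Y and k=k, OF pX pY, of 1] by (simp add: add.commute)
  have dg: "K X Y 0 (k-1+1) * K X Y 1 r - K X Y 1 (k-1) * K X Y 0 (r+1)
     = (-1)^(r+1) * (\<Prod>i\<in>{1..r}. Y i) * K X Y (r+1) (k-1-r)"
    by (rule K_dodg) (use r in auto)
  have e: "k-1+1 = k" using k by simp
  show ?thesis unfolding s p1 p2 t_def dg[unfolded e, symmetric] by (simp add: algebra_simps)
qed

theorem theorem5p4:
  fixes a b c :: "nat \<Rightarrow> 'a::comm_ring_1" and k n :: nat
  assumes "0 < k" and "k < n"
  defines "dd \<equiv> (\<lambda>i. b i * c i)"
  defines "e \<equiv> (\<lambda>i. - dd i)"
  defines "d \<equiv> (\<Prod>i\<in>{1..k}. dd i)"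
  defines "U \<equiv> (\<lambda>i. Ucheb i (pi_ev k a e k) d)"
  defines "m \<equiv> n div k" and "r \<equiv> n mod k"
  shows "det (Tk k n a b c)
           = U m * alpha_ev k a e (int (k + r)) - d * U (m - 1) * alpha_ev k a e (int r)
       \<and> det (Tk k n a b c)
           = U (m + 1) * alpha_ev k a e (int r)
             + dd k * (\<Prod>i\<in>{1..r}. dd i) * U m
               * alpha_shift_ev k (r + 1) a e (int k - int r - 2)
       \<and> (r = k - 1 \<longrightarrow>
            det (Tk k n a b c) = U (m + 1) * det (Tk k (k - 1) a b c)
          \<and> U (m + 1) * det (Tk k (k - 1) a b c) = U (m + 1) * alpha_ev k a e (int (k - 1)))"
proof -
  define X where "X = per k a"
  define Y where "Y = per k e"
  have k1: "k \<ge> 1" using assms(1) by simp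
  have pX: "\<And>i. X (i+k) = X i" unfolding X_def by (rule per_period)
  have pY: "\<And>i. Y (i+k) = Y i" unfolding Y_def by (rule per_period)
  have Ydd: "\<And>i. 1 \<le> i \<Longrightarrow> i \<le> k \<Longrightarrow> Y i = - dd i" unfolding Y_def e_def using per_low by metis
  have Yk: "Y k = - dd k" using Ydd[of k] k1 by simp
  have detK: "\<And>n'. det (Tk k n' a b c) = K X Y 0 (Suc n')"
  proof -
    fix n'
    have "(\<lambda>i. - (per k b i * per k c i)) = Y" unfolding Y_def e_def dd_def per_def by (rule ext) simp
    then show "det (Tk k n' a b c) = K X Y 0 (Suc n')" unfolding Tk_def det_tridiag X_def by simp
  qed
  have alK: "\<And>j. alpha_ev k a e (int j) = K X Y 0 (Suc j)"
    unfolding alpha_ev_def X_def Y_def using alpha_K k1 by blast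
  have rk: "r < k" unfolding r_def using assms(1) by simp
  have shK: "alpha_shift_ev k (r+1) a e (int k - int r - 2) = K X Y (r+1) (k-1-r)"
  proof (cases "r = k - 1")
    case True
    then have "int k - int r - 2 < 0" "k - 1 - r = 0" using k1 by auto
    then show ?thesis unfolding alpha_shift_ev_def alpha_def by simp
  next
    case False
    then have e1: "int k - int r - 2 = int (k - r - 2)" "Suc (k - r - 2) = k - 1 - r" using rk by auto
    have "alpha_shift_ev k (r+1) a e (int k - int r - 2) = K (\<lambda>i. X (r+1+i)) (\<lambda>i. Y (r+1+i)) 0 (Suc (k-r-2))"
      unfolding alpha_shift_ev_def e1(1) X_def Y_def using alpha_K k1 by blast
    also have "\<dots> = K X Y (r+1) (k-1-r)" unfolding K_shift e1(2) ..
    finally show ?thesis .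
  qed
  have betaK: "beta_ev k a e k = Y k * K X Y 1 (k-1)"
  proof (cases "k < 2")
    case True
    then have "k = 1" using k1 by simp
    then show ?thesis unfolding beta_ev_def by simp
  next
    case False
    have s1: "{2..<k-1} = {2..<2+(k-2)-1}" "{2..<k} = {2..<2+(k-2)}" using False by auto
    have "beta_ev k a e k = e k * Fs a e 2 (k-2)"
      unfolding beta_ev_def Fs_def sum_distrib_left s1 using False by (simp add: mult.assoc)
    also have "Fs a e 2 (k-2) = K a e 1 (k-1)" using Fs_K[of 2 a e "k-2"] False by (simp add: Suc_diff_Suc numeral_2_eq_2)
    also have "K a e 1 (k-1) = K X Y 1 (k-1)"
      by (rule K_cong) (auto simp: X_def Y_def per_low)
    also have "e k = Y k" unfolding Y_def using per_low[of k k e] k1 by simp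
    finally show ?thesis .
  qed
  define t where "t = pi_ev k a e k"
  have tK: "t = K X Y 0 (k+1) + Y k * K X Y 1 (k-1)"
    unfolding t_def pi_ev_def alK betaK by simp
  have dK: "d = (-1)^k * (\<Prod>i\<in>{1..k}. Y i)"
  proof -
    have "d = (\<Prod>i\<in>{1..k}. - Y i)" unfolding d_def by (rule prod.cong) (auto simp: Ydd)
    then show ?thesis by (simp add: prod_uminus)
  qed
  have "0 < n div k" using div_greater_zero_iff[of n k] assms(1) assms(2) by simp
  then have mpos: "m \<ge> 1" unfolding m_def by simp
  then obtain j where j: "m = Suc j" by (metis Suc_le_D One_nat_def)
  have nmk: "n = Suc j * k + r" unfolding r_def using j m_def div_mult_mod_eq[of n k] by simp
  have C1: "det (Tk k n a b c) = U m * K X Y 0 (k+r+1) - d * U (m-1) * K X Y 0 (r+1)"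
    unfolding detK nmk U_def j dK t_def[symmetric] tK using cheb_main[where X=X and Y=Y and k=k and j=j and r=r, OF assms(1) pX pY] by simp
  have Urec: "U (m+1) = t * U m - d * U (m-1)" unfolding U_def j t_def using Ucheb_rec by simp
  have P: "dd k * (\<Prod>i\<in>{1..r}. dd i) = Y k * (-1)^(r+1) * (\<Prod>i\<in>{1..r}. Y i)"
  proof -
    have "(\<Prod>i\<in>{1..r}. dd i) = (\<Prod>i\<in>{1..r}. - Y i)" by (rule prod.cong) (use rk in \<open>auto simp: Ydd\<close>)
    then show ?thesis unfolding Yk by (simp add: prod_uminus)
  qed
  have Dm: "K X Y 0 (k+r+1) - t * K X Y 0 (r+1) = dd k * (\<Prod>i\<in>{1..r}. dd i) * K X Y (r+1) (k-1-r)"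
    unfolding P tK using diff_main[where X=X and Y=Y and k=k and r=r, OF assms(1) pX pY rk] by (simp add: algebra_simps)
  have C2: "det (Tk k n a b c) = U (m + 1) * K X Y 0 (r+1) + dd k * (\<Prod>i\<in>{1..r}. dd i) * U m * K X Y (r+1) (k-1-r)"
  proof -
    define Q where "Q = dd k * (\<Prod>i\<in>{1..r}. dd i) * K X Y (r+1) (k-1-r)"
    have "det (Tk k n a b c) = U (m + 1) * K X Y 0 (r+1) + U m * Q"
      unfolding C1 Urec Q_def Dm[symmetric] by (simp add: algebra_simps)
    then show ?thesis unfolding Q_def by (simp add: algebra_simps)
  qed
  show ?thesis
  proof (intro conjI impI)
    show "det (Tk k n a b c) = U m * alpha_ev k a e (int (k + r)) - d * U (m - 1) * alpha_ev k a e (int r)"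
      unfolding alK C1 by simp
    show "det (Tk k n a b c) = U (m + 1) * alpha_ev k a e (int r)
             + dd k * (\<Prod>i\<in>{1..r}. dd i) * U m * alpha_shift_ev k (r + 1) a e (int k - int r - 2)"
      unfolding alK shK C2 by simp
    assume r1: "r = k - 1"
    have z: "K X Y (r+1) (k-1-r) = 0" using r1 by simp
    have kr: "Suc r = k" "Suc (k-1) = k" using r1 k1 by auto
    show "det (Tk k n a b c) = U (m + 1) * det (Tk k (k - 1) a b c)"
      using C2 k1 unfolding z detK by (simp add: kr)
    show "U (m + 1) * det (Tk k (k - 1) a b c) = U (m + 1) * alpha_ev k a e (int (k - 1))"
      unfolding detK alK ..
  qed
qed

end
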